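(* Let $s\ge 1$, $q=4^{2s}$, and let $\theta$ be the automorphism of $F_q$ given by $\theta(a)=a^{4^s}$. Let $n$ be odd and suppose $x^n-1=h(x)g(x)$ in $F_q[x;\theta]$. Then the skew cyclic code $C=\langle g(x)\rangle$ of length $n$ over $F_q$ is a reversible DNA code if and only if $g(x)$ is a palindromic polynomial.
   Context: $F_q[x;\theta]$ is the skew polynomial ring: polynomials $\sum a_ix^i$ with $a_i\in F_q$, usual addition, and multiplication determined by $xa=\theta(a)x$ for $a\in F_q$. A skew cyclic code of length $n$ is a linear code $C\subseteq F_q^n$ such that $(\theta(c_{n-1}),\theta(c_0),\ldots,\theta(c_{n-2}))\in C$ whenever $(c_0,\ldots,c_{n-1})\in C$; identifying $(c_0,\ldots,c_{n-1})$ with $c_0+c_1x+\dots+c_{n-1}x^{n-1}$, such codes are left $F_q[x;\theta]$-submodules of $F_q[x;\theta]/(x^n-1)$, and $\langle g(x)\rangle$ denotes the left submodule generated by $g(x)$. A polynomial $f(x)=a_0+\dots+a_tx^t$ of degree $t$ is palindromic if $a_i=a_{t-i}$ for all $i$. DNA correspondence: there is a fixed bijection $\tau:F_{4^{2s}}\to\{A,T,G,C\}^{2s}$ such that for every $\beta$, $\tau(\beta^{4^s})$ is the reverse of the string $\tau(\beta)$; it extends to $\phi:F_q^n\to\{A,T,G,C\}^{2sn}$ by concatenation. A code $C\subseteq F_q^n$ is a reversible DNA code if the reverse string $\phi(c)^r$ lies in $\phi(C)$ for all $c\in C$; equivalently, $(\theta(c_{n-1}),\ldots,\theta(c_1),\theta(c_0))\in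 C$ for every $(c_0,\ldots,c_{n-1})\in C$. *)

theory Defs
  imports "HOL-Computational_Algebra.Polynomial"
begin

text \<open>Skew polynomials F[x;th] are represented by ordinary coefficient sequences
  (type 'a poly); only the multiplication differs: x * a = th(a) * x.\<close>

definition skew_mult :: "('a::field \<Rightarrow> 'a) \<Rightarrow> 'a poly \<Rightarrow> 'a poly \<Rightarrow> 'a poly" where
  "skew_mult th p q =
     (\<Sum>i\<le>degree p. \<Sum>j\<le>degree q. monom (coeff p i * (th ^^ i) (coeff q j)) (i + j))"

text \<open>Remainder of right division by m (p = Q*m + r with deg r < deg m);
  this gives the canonical representative of p in the left module F[x;th]/F[x;th](x^n-1).\<close>

definition skew_rem :: "('a::field \<Rightarrow> 'a) \<Rightarrow> 'a poly \<Rightarrow> 'a poly \<Rightarrow> 'a poly" where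
  "skew_rem th p m =
     (THE r. (r = 0 \<or> degree r < degree m) \<and> (\<exists>Q. p = skew_mult th Q m + r))"

definition vec_of :: "nat \<Rightarrow> 'a::zero poly \<Rightarrow> 'a list" where
  "vec_of n r = map (coeff r) [0..<n]"

text \<open>The skew cyclic code <g> of length n: the left submodule of
  F[x;th]/(x^n-1) generated by g, as a set of vectors in F^n.\<close>

definition skew_code :: "('a::field \<Rightarrow> 'a) \<Rightarrow> nat \<Rightarrow> 'a poly \<Rightarrow> 'a list set" where
  "skew_code th n g =
     {vec_of n (skew_rem th (skew_mult th f g) (monom 1 n - 1)) | f. True}"

definition palindromic :: "'a::zero poly \<Rightarrow> bool" where
  "palindromic f \<longleftrightarrow> (\<forall>i\<le>degree f. coeff f i = coeff f (degree f - i))"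

datatype nucleotide = nA | nT | nG | nC

definition dna_phi :: "('a \<Rightarrow> nucleotide list) \<Rightarrow> 'a list \<Rightarrow> nucleotide list" where
  "dna_phi tau c = concat (map tau c)"

definition reversible_DNA_code :: "('a \<Rightarrow> nucleotide list) \<Rightarrow> 'a list set \<Rightarrow> bool" where
  "reversible_DNA_code tau Cd \<longleftrightarrow> (\<forall>c\<in>Cd. rev (dna_phi tau c) \<in> dna_phi tau ` Cd)"

end

theory Submission imports Defs begin


locale skw =
  fixes th :: "'a::field \<Rightarrow> 'a"
  assumes th_add: "\<And>a b. th (a + b) = th a + th b"
    and th_mult: "\<And>a b. th (a * b) = th a * th b"
    and th_invol: "\<And>a. th (th a) = a"
begin

abbreviation T where "T i \<equiv> th ^^ i"
abbreviation sm where "sm \<equiv> skew_mult th"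

lemma th0[simp]: "th 0 = 0"
  using th_add[of 0 0] by (metis add_cancel_right_right)
lemma T_add: "T i (a + b) = T i a + T i b"
  by (induction i) (auto simp: th_add)
lemma T_mult: "T i (a * b) = T i a * T i b"
  by (induction i) (auto simp: th_mult)
lemma T0[simp]: "T i 0 = 0"
  by (induction i) auto
lemma th1[simp]: "th 1 = 1"
proof -
  have "th 1 * th (th 1) = th (th 1)" using th_mult[of 1 "th 1"] by simp
  hence "th 1 * 1 = 1" using th_invol[of 1] by simp
  thus ?thesis by simp
qed
lemma T1[simp]: "T i 1 = 1"
  by (induction i) auto
lemma T_neg: "T i (- a) = - T i a"
  using T_add[of i a "-a"] by (metis T0 add.right_inverse minus_unique)
lemma T_diff: "T i (a - b) = T i a - T i b"
  using T_add[of i a "-b"] T_neg by simp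
lemma T_inj: "T i a = 0 \<longleftrightarrow> a = 0"
proof (induction i arbitrary: a)
  case (Suc i)
  have "th b = 0 \<longleftrightarrow> b = 0" for b using th_invol[of b] by (metis th0)
  then show ?case using Suc by simp
qed simp

lemma coeff_sm_raw: "coeff (sm p q) m =
  (\<Sum>i\<le>degree p. \<Sum>j\<le>degree q. if i + j = m then coeff p i * T i (coeff q j) else 0)"
  unfolding skew_mult_def by (simp add: coeff_sum coeff_monom)

lemma coeff_sm: "coeff (sm p q) m = (\<Sum>i\<le>m. coeff p i * T i (coeff q (m - i)))"
proof -
  have inner: "(\<Sum>j\<le>degree q. if i + j = m then coeff p i * T i (coeff q j) else 0)
     = (if i \<le> m then coeff p i * T i (coeff q (m - i)) else 0)" for i
  proof (cases "i \<le> m \<and> m - i \<le> degree q")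
    case True
    then have "(\<Sum>j\<le>degree q. if i + j = m then coeff p i * T i (coeff q j) else 0)
       = (\<Sum>j\<le>degree q. if j = m - i then coeff p i * T i (coeff q j) else 0)"
      by (intro sum.cong) auto
    then show ?thesis using True by simp
  next
    case False
    then have "(\<Sum>j\<le>degree q. if i + j = m then coeff p i * T i (coeff q j) else 0) = 0"
      by (intro sum.neutral) auto
    then show ?thesis using False by (auto simp: coeff_eq_0)
  qed
  have "coeff (sm p q) m = (\<Sum>i\<le>degree p. if i \<le> m then coeff p i * T i (coeff q (m - i)) else 0)"
    unfolding coeff_sm_raw inner ..
  also have "\<dots> = (\<Sum>i\<le>max (degree p) m. if i \<le> m then coeff p i * T i (coeff q (m - i)) else 0)"
    by (rule sum.mono_neutral_left) (auto simp: coeff_eq_0)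
  also have "\<dots> = (\<Sum>i\<le>m. coeff p i * T i (coeff q (m - i)))"
    by (rule sum.mono_neutral_cong_right) auto
  finally show ?thesis .
qed

lemma sm_add_left: "sm (p + q) r = sm p r + sm q r"
  by (rule poly_eqI) (simp add: coeff_sm algebra_simps sum.distrib)
lemma sm_add_right: "sm p (q + r) = sm p q + sm p r"
  by (rule poly_eqI) (simp add: coeff_sm algebra_simps sum.distrib T_add)
lemma sm_0_left[simp]: "sm 0 r = 0"
  by (rule poly_eqI) (simp add: coeff_sm)
lemma sm_0_right[simp]: "sm p 0 = 0"
  by (rule poly_eqI) (simp add: coeff_sm)
lemma sm_minus_left: "sm (- p) r = - sm p r"
  by (rule poly_eqI) (simp add: coeff_sm sum_negf)
lemma sm_diff_left: "sm (p - q) r = sm p r - sm q r"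
  using sm_add_left[of p "-q" r] sm_minus_left[of q r] by simp
lemma sm_minus_right: "sm p (- r) = - sm p r"
  by (rule poly_eqI) (simp add: coeff_sm sum_negf T_neg)
lemma sm_diff_right: "sm p (q - r) = sm p q - sm p r"
  using sm_add_right[of p q "-r"] sm_minus_right[of p r] by simp
lemma sm_sum_left: "sm (\<Sum>x\<in>S. f x) r = (\<Sum>x\<in>S. sm (f x) r)"
  by (induction S rule: infinite_finite_induct) (auto simp: sm_add_left)
lemma sm_sum_right: "sm p (\<Sum>x\<in>S. f x) = (\<Sum>x\<in>S. sm p (f x))"
  by (induction S rule: infinite_finite_induct) (auto simp: sm_add_right)

lemma coeff_sm_monom: "coeff (sm (monom a e) r) m = (if e \<le> m then a * T e (coeff r (m - e)) else 0)"
proof -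
  have "coeff (sm (monom a e) r) m = (\<Sum>i\<le>m. if i = e then a * T i (coeff r (m - i)) else 0)"
    unfolding coeff_sm by (intro sum.cong) (auto simp: coeff_monom)
  then show ?thesis by simp
qed

lemma sm_monom_monom: "sm (monom a i) (monom b j) = monom (a * T i b) (i + j)"
  by (rule poly_eqI) (auto simp: coeff_sm_monom coeff_monom)

lemma sm_const: "sm [:a:] q = smult a q"
  using coeff_sm_monom[of a 0 q] by (intro poly_eqI) (simp add: monom_0)

lemma sm_one_right: "sm p 1 = p"
proof (rule poly_eqI)
  fix m
  have "coeff (sm p 1) m = (\<Sum>i\<le>m. if i = m then coeff p i else 0)"
    unfolding coeff_sm by (intro sum.cong) (auto simp: coeff_1)
  then show "coeff (sm p 1) m = coeff p m" by simp
qed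

lemma coeff_sm_high: "m > degree p + degree q \<Longrightarrow> coeff (sm p q) m = 0"
  unfolding coeff_sm
proof (intro sum.neutral ballI)
  fix i assume "m > degree p + degree q" "i \<in> {..m}"
  then have "i > degree p \<or> m - i > degree q" by auto
  then show "coeff p i * T i (coeff q (m - i)) = 0" by (auto simp: coeff_eq_0)
qed

lemma coeff_sm_top: "coeff (sm p q) (degree p + degree q) = lead_coeff p * T (degree p) (lead_coeff q)"
proof -
  let ?m = "degree p + degree q"
  have "coeff (sm p q) ?m = (\<Sum>i\<le>?m. if i = degree p then lead_coeff p * T (degree p) (lead_coeff q) else 0)"
    unfolding coeff_sm
  proof (intro sum.cong refl)
    fix i assume "i \<in> {..?m}"
    show "coeff p i * T i (coeff q (?m - i)) = (if i = degree p then lead_coeff p * T (degree p) (lead_coeff q) else 0)"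
    proof (cases "i = degree p")
      case False
      then have "i > degree p \<or> ?m - i > degree q" using \<open>i \<in> {..?m}\<close> by auto
      then show ?thesis using False by (auto simp: coeff_eq_0)
    qed simp
  qed
  then show ?thesis by simp
qed

lemma degree_sm: "p \<noteq> 0 \<Longrightarrow> q \<noteq> 0 \<Longrightarrow> degree (sm p q) = degree p + degree q"
proof -
  assume "p \<noteq> 0" "q \<noteq> 0"
  then have nz: "coeff (sm p q) (degree p + degree q) \<noteq> 0"
    by (simp add: coeff_sm_top T_inj)
  show ?thesis
    using degree_le[of "degree p + degree q" "sm p q"] coeff_sm_high[of p q] le_degree[OF nz]
    by (simp add: le_antisym)
qed

lemma sm_nz: "p \<noteq> 0 \<Longrightarrow> q \<noteq> 0 \<Longrightarrow> sm p q \<noteq> 0"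
  using coeff_sm_top[of p q] by (auto simp: T_inj)


lemma sum3_swap: "(\<Sum>l\<in>C. \<Sum>j\<in>B. \<Sum>i\<in>A. F i j l) = (\<Sum>i\<in>A. \<Sum>j\<in>B. \<Sum>l\<in>C. (F i j l :: 'b::comm_monoid_add))"
proof -
  have "(\<Sum>l\<in>C. \<Sum>j\<in>B. \<Sum>i\<in>A. F i j l) = (\<Sum>l\<in>C. \<Sum>i\<in>A. \<Sum>j\<in>B. F i j l)"
    by (rule sum.cong[OF refl], rule sum.swap)
  also have "\<dots> = (\<Sum>i\<in>A. \<Sum>l\<in>C. \<Sum>j\<in>B. F i j l)" by (rule sum.swap)
  also have "\<dots> = (\<Sum>i\<in>A. \<Sum>j\<in>B. \<Sum>l\<in>C. F i j l)"
    by (rule sum.cong[OF refl], rule sum.swap)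
  finally show ?thesis .
qed

lemma sm_assoc_monom: "sm (sm (monom a i) (monom b j)) (monom c l) = sm (monom a i) (sm (monom b j) (monom c l))"
  by (simp add: sm_monom_monom T_mult funpow_add algebra_simps)

lemma sm_assoc: "sm (sm p q) r = sm p (sm q r)"
proof -
  have "sm (sm p q) r = sm (sm (\<Sum>i\<le>degree p. monom (coeff p i) i) (\<Sum>j\<le>degree q. monom (coeff q j) j)) (\<Sum>l\<le>degree r. monom (coeff r l) l)"
    by (simp only: poly_as_sum_of_monoms)
  also have "\<dots> = (\<Sum>i\<le>degree p. \<Sum>j\<le>degree q. \<Sum>l\<le>degree r. sm (sm (monom (coeff p i) i) (monom (coeff q j) j)) (monom (coeff r l) l))"
    apply (simp only: sm_sum_left sm_sum_right) by (rule sum3_swap)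
  also have "\<dots> = (\<Sum>i\<le>degree p. \<Sum>j\<le>degree q. \<Sum>l\<le>degree r. sm (monom (coeff p i) i) (sm (monom (coeff q j) j) (monom (coeff r l) l)))"
    by (simp only: sm_assoc_monom)
  also have "\<dots> = sm (\<Sum>i\<le>degree p. monom (coeff p i) i) (sm (\<Sum>j\<le>degree q. monom (coeff q j) j) (\<Sum>l\<le>degree r. monom (coeff r l) l))"
    apply (simp only: sm_sum_left sm_sum_right) by (rule sum3_swap[symmetric])
  finally show ?thesis by (simp only: poly_as_sum_of_monoms)
qed


lemma degree_X: "n \<ge> 1 \<Longrightarrow> degree (monom (1::'a) n - 1) = n"
proof -
  assume n: "n \<ge> 1"
  have "coeff (monom (1::'a) n - 1) n \<noteq> 0" using n by (simp add: coeff_monom coeff_1)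
  moreover have "\<forall>i>n. coeff (monom (1::'a) n - 1) i = 0" by (auto simp: coeff_monom coeff_1)
  ultimately show ?thesis using degree_le le_degree by (metis le_antisym)
qed

lemma sm_monom_X: "sm (monom c e) (monom 1 n - 1) = monom c (e + n) - monom c e"
  by (simp add: sm_diff_right sm_monom_monom sm_one_right)

lemma degree_lt_aux: "degree p \<le> d \<Longrightarrow> coeff p d = 0 \<Longrightarrow> d > 0 \<Longrightarrow> degree p < d"
  by (metis le_neq_implies_less leading_coeff_0_iff degree_0)

lemma div_exists: "n \<ge> 1 \<Longrightarrow> \<exists>Q r. p = sm Q (monom 1 n - 1) + r \<and> degree r < n"
proof (induction "degree p" arbitrary: p rule: less_induct)
  case less
  show ?case
  proof (cases "degree p < n")
    case True
    then show ?thesis by (intro exI[of _ 0] exI[of _ p]) simp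
  next
    case False
    define d where "d = degree p"
    define c where "c = lead_coeff p"
    define p' where "p' = p - sm (monom c (d - n)) (monom 1 n - 1)"
    have dn: "d - n + n = d" using False d_def by simp
    have p'eq: "p' = p - monom c d + monom c (d - n)"
      unfolding p'_def sm_monom_X dn by simp
    have "degree p' \<le> d"
      unfolding p'eq d_def by (intro degree_add_le degree_diff_le) (auto simp: degree_monom_le intro: order.trans[OF degree_monom_le])
    moreover have "coeff p' d = 0" using False d_def less.prems
      unfolding p'eq c_def by (simp add: coeff_monom)
    ultimately have "degree p' < degree p"
      using degree_lt_aux False less.prems d_def by fastforce
    then obtain Q r where Qr: "p' = sm Q (monom 1 n - 1) + r" "degree r < n"
      using less by blast
    have "p = sm (Q + monom c (d - n)) (monom 1 n - 1) + r"
      using Qr(1) unfolding p'_def by (simp add: sm_add_left algebra_simps)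
    then show ?thesis using Qr(2) by blast
  qed
qed

lemma div_unique:
  assumes n: "n \<ge> 1" and "sm Q1 (monom 1 n - 1) + r1 = sm Q2 (monom 1 n - 1) + r2"
    and "degree r1 < n" "degree r2 < n"
  shows "r1 = r2"
proof (rule ccontr)
  assume ne: "r1 \<noteq> r2"
  have eq: "sm (Q1 - Q2) (monom 1 n - 1) = r2 - r1"
    using assms(2) by (simp add: sm_diff_left algebra_simps)
  have "Q1 \<noteq> Q2" using ne assms(2) by auto
  then have "degree (sm (Q1 - Q2) (monom 1 n - 1)) = degree (Q1 - Q2) + n"
    using degree_sm[of "Q1 - Q2" "monom 1 n - 1"] degree_X[OF n] n
    by (metis add_diff_cancel_left' diff_zero monom_eq_0_iff one_neq_zero degree_0 eq_iff_diff_eq_0 le_zero_eq not_one_le_zero)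
  moreover have "degree (r2 - r1) < n"
    using degree_diff_le_max[of r2 r1] assms(3,4) by simp
  ultimately show False using eq by simp
qed

lemma rem_eq:
  assumes n: "n \<ge> 1" and "p = sm Q (monom 1 n - 1) + r" "degree r < n"
  shows "skew_rem th p (monom 1 n - 1) = r"
  unfolding skew_rem_def
proof (rule the_equality)
  show "(r = 0 \<or> degree r < degree (monom 1 n - 1 :: 'a poly)) \<and> (\<exists>Q. p = sm Q (monom 1 n - 1) + r)"
  proof
    show "r = 0 \<or> degree r < degree (monom 1 n - 1 :: 'a poly)" using assms(3) degree_X[OF n] by metis
    show "\<exists>Q. p = sm Q (monom 1 n - 1) + r" using assms(2) by blast
  qed
next
  fix r' assume "(r' = 0 \<or> degree r' < degree (monom 1 n - 1 :: 'a poly)) \<and> (\<exists>Q. p = sm Q (monom 1 n - 1) + r')"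
  then obtain Q' where "p = sm Q' (monom 1 n - 1) + r'" "degree r' < n"
    using degree_X[OF n] n by auto
  then show "r' = r" using div_unique[OF n] assms by metis
qed

lemma rem_prop:
  assumes n: "n \<ge> 1"
  shows "\<exists>Q. p = sm Q (monom 1 n - 1) + skew_rem th p (monom 1 n - 1) \<and> degree (skew_rem th p (monom 1 n - 1)) < n"
  using div_exists[OF n, of p] rem_eq[OF n] by metis


lemma code_char:
  assumes n: "n \<ge> 1" and X: "monom 1 n - 1 = sm h g"
  shows "skew_code th n g = vec_of n ` {c. degree c < n \<and> (\<exists>f. c = sm f g)}"
proof (intro equalityI subsetI)
  fix v assume "v \<in> skew_code th n g"
  then obtain f where v: "v = vec_of n (skew_rem th (sm f g) (monom 1 n - 1))"
    unfolding skew_code_def by blast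
  obtain Q where Q: "sm f g = sm Q (monom 1 n - 1) + skew_rem th (sm f g) (monom 1 n - 1)"
    "degree (skew_rem th (sm f g) (monom 1 n - 1)) < n"
    using rem_prop[OF n] by blast
  have "skew_rem th (sm f g) (monom 1 n - 1) = sm f g - sm Q (sm h g)"
    using Q(1) X by (metis add_diff_cancel_left')
  also have "\<dots> = sm (f - sm Q h) g" by (simp add: sm_diff_left sm_assoc)
  finally show "v \<in> vec_of n ` {c. degree c < n \<and> (\<exists>f. c = sm f g)}"
    using v Q(2) by auto
next
  fix v assume "v \<in> vec_of n ` {c. degree c < n \<and> (\<exists>f. c = sm f g)}"
  then obtain f where f: "v = vec_of n (sm f g)" "degree (sm f g) < n" by auto
  have "skew_rem th (sm f g) (monom 1 n - 1) = sm f g"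
    by (rule rem_eq[OF n, of _ 0]) (use f in auto)
  then show "v \<in> skew_code th n g" unfolding skew_code_def using f by (metis (mono_tags, lifting) mem_Collect_eq)
qed

lemma T_par: "T i a = (if odd i then th a else a)"
  by (induction i) (auto simp: th_invol)
lemma T_odd: "odd i \<Longrightarrow> T i a = th a" by (simp add: T_par)

lemma coeff_sm_right_monom: "coeff (sm p (monom 1 n)) m = (if n \<le> m then coeff p (m - n) else 0)"
proof -
  have "coeff (sm p (monom 1 n)) m = (\<Sum>i\<le>m. if i = m - n \<and> n \<le> m then coeff p i else 0)"
    unfolding coeff_sm by (intro sum.cong) (auto simp: coeff_monom)
  then show ?thesis by (cases "n \<le> m") auto
qed

lemma K1:
  assumes n: "odd n" and X: "monom 1 n - 1 = sm h g"
  shows "\<exists>f. map_poly th g = sm f g"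
proof -
  let ?tg = "map_poly th g"
  have comm: "sm (monom 1 n) g = sm ?tg (monom 1 n)"
    by (rule poly_eqI) (simp add: coeff_sm_monom coeff_sm_right_monom coeff_map_poly T_odd[OF n])
  have "sm ?tg (monom 1 n - 1) = sm ?tg (monom 1 n) - ?tg"
    by (simp add: sm_diff_right sm_one_right)
  then have "?tg = sm (monom 1 n) g - sm ?tg (sm h g)" using comm X by simp
  also have "\<dots> = sm (monom 1 n - sm ?tg h) g" by (simp add: sm_diff_left sm_assoc)
  finally show ?thesis by blast
qed

lemma K2:
  assumes g: "g \<noteq> 0" and d: "degree (sm f g) \<le> degree g"
  shows "sm f g = smult (coeff f 0) g"
proof (cases "f = 0")
  case False
  then have "degree f = 0" using degree_sm[OF False g] d by simp
  then have "f = [:coeff f 0:]" using degree_0_id by metis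
  then show ?thesis using sm_const by metis
qed simp

lemma th_nz: "th a = 0 \<longleftrightarrow> a = 0"
  using T_inj[of 1 a] by simp

lemma K3:
  assumes g: "g \<noteq> 0" and b: "\<forall>l. th (coeff g l) = b * coeff g l"
  shows "\<exists>\<beta>. \<beta> \<noteq> 0 \<and> (\<forall>l. T i (coeff g l) = \<beta> * coeff g l)"
proof (induction i)
  case 0 then show ?case by (intro exI[of _ 1]) simp
next
  case (Suc i)
  then obtain \<beta> where \<beta>: "\<beta> \<noteq> 0" "\<forall>l. T i (coeff g l) = \<beta> * coeff g l" by blast
  have "b \<noteq> 0" using b[rule_format, of "degree g"] g th_nz[of "lead_coeff g"] by auto
  have "\<forall>l. T (Suc i) (coeff g l) = (th \<beta> * b) * coeff g l"
    using \<beta>(2) b by (simp add: th_mult)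
  moreover have "th \<beta> * b \<noteq> 0" using \<beta>(1) \<open>b \<noteq> 0\<close> th_nz by simp
  ultimately show ?case by blast
qed

lemma thg_scalar:
  assumes n: "odd n" and X: "monom 1 n - 1 = sm h g" and g: "g \<noteq> 0" and k: "degree g < n"
  shows "\<exists>b. \<forall>l. th (coeff g l) = b * coeff g l"
proof -
  obtain f where f: "map_poly th g = sm f g" using K1[OF n X] by blast
  have "degree (map_poly th g) = degree g" by (rule degree_map_poly) (simp add: th_nz)
  then have "map_poly th g = smult (coeff f 0) g" using K2[OF g, of f] f by simp
  then have "coeff (map_poly th g) l = coeff f 0 * coeff g l" for l by simp
  then show ?thesis by (auto simp: coeff_map_poly)
qed


definition rvp :: "nat \<Rightarrow> 'a poly \<Rightarrow> 'a poly" where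
  "rvp n c = Poly (map th (rev (vec_of n c)))"

lemma coeff_rvp: "coeff (rvp n c) m = (if m < n then th (coeff c (n - 1 - m)) else 0)"
  by (auto simp: rvp_def nth_default_def vec_of_def rev_nth)

lemma vec_of_rvp: "vec_of n (rvp n c) = map th (rev (vec_of n c))"
  by (rule nth_equalityI) (auto simp: vec_of_def coeff_rvp rev_nth)

lemma degree_rvp: "n \<ge> 1 \<Longrightarrow> degree (rvp n c) < n"
proof -
  assume "n \<ge> 1"
  have "degree (rvp n c) \<le> n - 1" by (rule degree_le) (auto simp: coeff_rvp)
  then show ?thesis using \<open>n \<ge> 1\<close> by simp
qed

lemma rvp_add: "rvp n (p + q) = rvp n p + rvp n q"
  by (rule poly_eqI) (simp add: coeff_rvp th_add)
lemma rvp_0[simp]: "rvp n 0 = 0"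
  by (rule poly_eqI) (simp add: coeff_rvp)
lemma rvp_sum: "rvp n (\<Sum>x\<in>S. f x) = (\<Sum>x\<in>S. rvp n (f x))"
  by (induction S rule: infinite_finite_induct) (auto simp: rvp_add)

lemma vec_of_inj: "degree c < n \<Longrightarrow> degree d < n \<Longrightarrow> vec_of n c = vec_of n d \<Longrightarrow> c = d"
proof (rule poly_eqI)
  fix i assume "degree c < n" "degree d < n" "vec_of n c = vec_of n d"
  show "coeff c i = coeff d i"
  proof (cases "i < n")
    case True
    then show ?thesis using \<open>vec_of n c = vec_of n d\<close> unfolding vec_of_def
      by (metis (no_types, lifting) add_0 diff_zero length_map length_upt nth_map nth_upt)
  next
    case False
    then show ?thesis using \<open>degree c < n\<close> \<open>degree d < n\<close> by (simp add: coeff_eq_0)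
  qed
qed

lemma pal_lemma:
  fixes g :: "'a poly"
  assumes ch: "(1::'a) + 1 = 0" and g: "g \<noteq> 0"
    and e: "\<forall>m\<le>degree g. coeff g (degree g - m) = e * coeff g m"
  shows "palindromic g"
proof -
  let ?k = "degree g"
  have g0: "coeff g ?k = e * coeff g 0" using e by auto
  have gk: "coeff g 0 = e * coeff g ?k" using e[rule_format, of ?k] by simp
  have "coeff g 0 \<noteq> 0" using g0 g leading_coeff_0_iff by fastforce
  then have "e * e = 1" using g0 gk by (metis mult.assoc mult_cancel_right1)
  then have "(e - 1) * (e - 1) = 0"
  proof -
    have "(e - 1) * (e - 1) = e * e + 1 - (1 + 1) * e" by (simp add: algebra_simps)
    also have "\<dots> = 0" using \<open>e * e = 1\<close> ch by simp
    finally show ?thesis .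
  qed
  then have "e = 1" by simp
  then show ?thesis unfolding palindromic_def using e by simp
qed

lemma fwd:
  assumes ch: "(1::'a) + 1 = 0" and n: "odd n" and X: "monom 1 n - 1 = sm h g"
    and g: "g \<noteq> 0" and k: "degree g < n"
    and R: "\<forall>c. degree c < n \<and> (\<exists>f. c = sm f g) \<longrightarrow> (\<exists>f. rvp n c = sm f g)"
  shows "palindromic g"
proof -
  define k where "k = degree g"
  define A where "A = n - 1 - k"
  have nA: "n = A + k + 1" using k unfolding A_def k_def by simp
  define c where "c = sm (monom 1 A) g"
  have "degree c = A + k" unfolding c_def k_def
    using degree_sm[of "monom 1 A" g] g by (simp add: degree_monom_eq)
  then have "degree c < n" using nA by simp
  then obtain f where f: "rvp n c = sm f g" using R c_def by blast
  have cr: "coeff (rvp n c) m = (if m \<le> k then T (Suc A) (coeff g (k - m)) else 0)" for m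
  proof (cases "m \<le> k")
    case True
    then have "n - 1 - m - A = k - m" "A \<le> n - 1 - m" "m < n" using nA by auto
    then show ?thesis using True unfolding coeff_rvp c_def by (simp add: coeff_sm_monom)
  next
    case False
    then show ?thesis unfolding coeff_rvp c_def using nA by (auto simp: coeff_sm_monom)
  qed
  have "degree (rvp n c) \<le> k" by (rule degree_le) (simp add: cr)
  then have "rvp n c = smult (coeff f 0) g" using K2[OF g, of f] f k_def by simp
  then have eq: "\<forall>m\<le>k. T (Suc A) (coeff g (k - m)) = coeff f 0 * coeff g m"
    using cr by (metis coeff_smult)
  obtain b where b: "\<forall>l. th (coeff g l) = b * coeff g l" using thg_scalar[OF n X g k] by blast
  obtain \<beta> where \<beta>: "\<beta> \<noteq> 0" "\<forall>l. T (Suc A) (coeff g l) = \<beta> * coeff g l"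
    using K3[OF g b] by blast
  have "\<forall>m\<le>degree g. coeff g (degree g - m) = (coeff f 0 / \<beta>) * coeff g m"
  proof (intro allI impI)
    fix m assume m: "m \<le> degree g"
    have "\<beta> * coeff g (k - m) = coeff f 0 * coeff g m" using eq \<beta>(2) m k_def by metis
    then show "coeff g (degree g - m) = (coeff f 0 / \<beta>) * coeff g m"
      using \<beta>(1) k_def by (simp add: field_simps)
  qed
  then show ?thesis using pal_lemma[OF ch g] by blast
qed


lemma L_rv:
  assumes pal: "palindromic g" and g: "g \<noteq> 0" and nA: "n = A + degree g + 1" and j: "j \<le> A"
    and b: "\<forall>l. th (coeff g l) = b * coeff g l"
  shows "\<exists>e. rvp n (sm (monom a j) g) = sm (monom e (A - j)) g"
proof -
  let ?k = "degree g"
  obtain \<beta>1 where \<beta>1: "\<forall>l. T (Suc j) (coeff g l) = \<beta>1 * coeff g l" using K3[OF g b] by blast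
  obtain \<beta>2 where \<beta>2: "\<beta>2 \<noteq> 0" "\<forall>l. T (A - j) (coeff g l) = \<beta>2 * coeff g l" using K3[OF g b] by blast
  define e where "e = th a * \<beta>1 / \<beta>2"
  have idx: "(if m < n \<and> j \<le> n - 1 - m then coeff g (n - 1 - m - j) else 0)
      = (if A - j \<le> m then coeff g (m - (A - j)) else 0)" for m
  proof (cases "A - j \<le> m")
    case False
    then have "n - 1 - m - j > ?k" using nA j by linarith
    then show ?thesis using False by (auto simp: coeff_eq_0)
  next
    case True
    show ?thesis
    proof (cases "m \<le> n - 1 - j")
      case False
      then have "m - (A - j) > ?k" using nA j True by linarith
      then show ?thesis using False True by (auto simp: coeff_eq_0)
    next
      case c2: True
      then have i1: "n - 1 - m - j \<le> ?k" "?k - (n - 1 - m - j) = m - (A - j)" "m < n" "j \<le> n - 1 - m"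
        using nA j True by linarith+
      have "coeff g (n - 1 - m - j) = coeff g (?k - (n - 1 - m - j))"
        using pal i1(1) unfolding palindromic_def by blast
      then show ?thesis using i1 True by simp
    qed
  qed
  have "rvp n (sm (monom a j) g) = sm (monom e (A - j)) g"
  proof (rule poly_eqI)
    fix m
    have "coeff (rvp n (sm (monom a j) g)) m
        = th a * \<beta>1 * (if m < n \<and> j \<le> n - 1 - m then coeff g (n - 1 - m - j) else 0)"
      unfolding coeff_rvp coeff_sm_monom using \<beta>1 by (auto simp: th_mult)
    also have "\<dots> = th a * \<beta>1 * (if A - j \<le> m then coeff g (m - (A - j)) else 0)"
      by (simp only: idx)
    also have "\<dots> = coeff (sm (monom e (A - j)) g) m"
      unfolding coeff_sm_monom e_def using \<beta>2 by auto
    finally show "coeff (rvp n (sm (monom a j) g)) m = coeff (sm (monom e (A - j)) g) m" .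
  qed
  then show ?thesis by blast
qed

lemma bwd:
  assumes n: "odd n" and X: "monom 1 n - 1 = sm h g" and g: "g \<noteq> 0"
    and pal: "palindromic g" and c: "degree c < n" and f: "c = sm f g"
  shows "\<exists>f'. rvp n c = sm f' g"
proof (cases "f = 0")
  case True
  then show ?thesis using f by (intro exI[of _ 0]) simp
next
  case False
  define A where "A = n - 1 - degree g"
  have dfg: "degree f + degree g < n" using degree_sm[OF False g] c f by simp
  then have nA: "n = A + degree g + 1" unfolding A_def by simp
  have k: "degree g < n" using dfg by simp
  obtain b where b: "\<forall>l. th (coeff g l) = b * coeff g l" using thg_scalar[OF n X g k] by blast
  have "\<forall>i\<in>{..degree f}. \<exists>e. rvp n (sm (monom (coeff f i) i) g) = sm (monom e (A - i)) g"
  proof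
    fix i assume "i \<in> {..degree f}"
    then have "i \<le> A" using dfg unfolding A_def by simp
    then show "\<exists>e. rvp n (sm (monom (coeff f i) i) g) = sm (monom e (A - i)) g"
      using L_rv[OF pal g nA _ b] by blast
  qed
  then obtain E where E: "\<forall>i\<in>{..degree f}. rvp n (sm (monom (coeff f i) i) g) = sm (monom (E i) (A - i)) g"
    by metis
  have "rvp n c = rvp n (sm (\<Sum>i\<le>degree f. monom (coeff f i) i) g)"
    using f by (simp only: poly_as_sum_of_monoms)
  also have "\<dots> = (\<Sum>i\<le>degree f. rvp n (sm (monom (coeff f i) i) g))"
    by (simp only: sm_sum_left rvp_sum)
  also have "\<dots> = (\<Sum>i\<le>degree f. sm (monom (E i) (A - i)) g)"
    using E by (intro sum.cong) auto
  also have "\<dots> = sm (\<Sum>i\<le>degree f. monom (E i) (A - i)) g"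
    by (simp only: sm_sum_left)
  finally show ?thesis by blast
qed

end



lemma ff_char_card:
  fixes dummy :: "'a::{field,finite}"
  shows "(of_nat (card (UNIV :: 'a set)) :: 'a) = 0"
proof -
  have "(\<Sum>x\<in>(UNIV::'a set). x + 1) = (\<Sum>x\<in>UNIV. x)"
    by (rule sum.reindex_bij_witness[where i="\<lambda>x. x - 1" and j="\<lambda>x. x + 1"]) auto
  then show ?thesis by (simp add: sum.distrib)
qed


lemma ff_pow:
  fixes a :: "'a::{field,finite}"
  shows "a ^ card (UNIV :: 'a set) = a"
proof (cases "a = 0")
  case True
  have "card (UNIV :: 'a set) > 0" using card_gt_0_iff[of "UNIV :: 'a set"] by simp
  then show ?thesis using True by (simp add: power_0_left)
next
  case False
  define S where "S = UNIV - {0::'a}"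
  have fin: "finite S" by simp
  have "prod (\<lambda>x. a * x) S = prod (\<lambda>x. x) S"
    unfolding S_def
    by (rule prod.reindex_bij_witness[where i="\<lambda>x. x / a" and j="\<lambda>x. a * x"]) (use False in auto)
  moreover have "prod (\<lambda>x. a * x) S = a ^ card S * prod (\<lambda>x. x) S"
    by (simp add: prod.distrib)
  moreover have "prod (\<lambda>x. x) S \<noteq> 0" unfolding S_def by (simp add: prod_zero_iff)
  ultimately have "a ^ card S = 1" by (metis mult_cancel_right2)
  moreover have "card (UNIV :: 'a set) = Suc (card S)"
  proof -
    have "card S = card (UNIV :: 'a set) - 1" unfolding S_def by (simp add: card_Diff_singleton)
    moreover have "card (UNIV :: 'a set) > 0" using card_gt_0_iff[of "UNIV :: 'a set"] by simp
    ultimately show ?thesis by simp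
  qed
  ultimately show ?thesis by simp
qed

lemma frob_add:
  fixes a b :: "'a::field"
  assumes ch: "(1::'a) + 1 = 0"
  shows "(a + b) ^ (2 ^ m) = a ^ (2 ^ m) + b ^ (2 ^ m)"
proof (induction m)
  case (Suc m)
  have sq: "(x + y) ^ 2 = x ^ 2 + y ^ 2" for x y :: 'a
  proof -
    have "(x + y) ^ 2 = x ^ 2 + y ^ 2 + (1 + 1) * (x * y)" by (simp add: power2_eq_square algebra_simps)
    then show ?thesis using ch by simp
  qed
  have "(a + b) ^ (2 ^ Suc m) = ((a + b) ^ (2 ^ m)) ^ 2" by (simp add: power_mult[symmetric] mult.commute)
  also have "\<dots> = (a ^ (2 ^ m)) ^ 2 + (b ^ (2 ^ m)) ^ 2" using Suc sq by simp
  also have "\<dots> = a ^ (2 ^ Suc m) + b ^ (2 ^ Suc m)" by (simp add: power_mult[symmetric] mult.commute)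
  finally show ?case .
qed simp


lemma dna_inj:
  assumes L: "\<And>x. length (tau x) = L" and L0: "L > 0" and inj: "inj tau"
  shows "dna_phi tau u = dna_phi tau v \<Longrightarrow> u = v"
proof (induction u arbitrary: v)
  case Nil
  show ?case
  proof (cases v)
    case (Cons y v')
    then have "tau y = []" using Nil unfolding dna_phi_def by simp
    then have False using L[of y] L0 by simp
    then show ?thesis ..
  qed simp
next
  case (Cons x u)
  show ?case
  proof (cases v)
    case Nil
    then have "tau x = []" using Cons.prems unfolding dna_phi_def by simp
    then have False using L[of x] L0 by simp
    then show ?thesis ..
  next
    case (Cons y v')
    have e: "tau x @ concat (map tau u) = tau y @ concat (map tau v')"
      using Cons.prems Cons unfolding dna_phi_def by simp
    have "length (tau x) = length (tau y)" using L by simp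
    then have "tau x = tau y" using e by (simp add: append_eq_append_conv)
    then have "x = y" using inj by (simp add: inj_eq)
    moreover have "dna_phi tau u = dna_phi tau v'" using e \<open>tau x = tau y\<close> unfolding dna_phi_def by simp
    ultimately show ?thesis using Cons.IH[of v'] Cons by simp
  qed
qed

lemma dna_rev:
  assumes tr: "\<And>b. tau (th b) = rev (tau b)"
  shows "rev (dna_phi tau v) = dna_phi tau (map th (rev v))"
  unfolding dna_phi_def by (simp add: rev_concat rev_map comp_def tr)

theorem theorem6:
  fixes s n :: nat
    and tau :: "'a::{field,finite} \<Rightarrow> nucleotide list"
    and h g :: "'a poly"
  defines "th \<equiv> (\<lambda>a::'a. a ^ (4 ^ s))"
  assumes s: "s \<ge> 1"
    and card: "card (UNIV :: 'a set) = 4 ^ (2 * s)"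
    and tau_bij: "bij_betw tau UNIV {w. length w = 2 * s}"
    and tau_rev: "\<And>b. tau (b ^ (4 ^ s)) = rev (tau b)"
    and n_odd: "odd n"
    and fact: "monom 1 n - 1 = skew_mult th h g"
  shows "reversible_DNA_code tau (skew_code th n g) \<longleftrightarrow> palindromic g"
proof -
  have "(of_nat (4 ^ (2 * s)) :: 'a) = 0" using ff_char_card[where 'a='a] card by simp
  then have "(2::'a) ^ (4 * s) = 0" by (simp add: power_mult)
  then have ch: "(1::'a) + 1 = 0" by simp
  have q4: "(4::nat) ^ s = 2 ^ (2 * s)" by (simp add: power_mult)
  have th_add: "th (a + b) = th a + th b" for a b
    unfolding th_def q4 by (rule frob_add[OF ch])
  have th_mult: "th (a * b) = th a * th b" for a b
    unfolding th_def by (simp add: power_mult_distrib)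
  have th_invol: "th (th a) = a" for a
  proof -
    have "th (th a) = a ^ (4 ^ s * 4 ^ s)" unfolding th_def by (simp add: power_mult)
    also have "(4::nat) ^ s * 4 ^ s = card (UNIV :: 'a set)" using card by (simp add: power_add[symmetric] mult_2)
    finally show ?thesis using ff_pow by simp
  qed
  interpret skw th using th_add th_mult th_invol by unfold_locales
  have n1: "n \<ge> 1" using n_odd by (cases n) auto
  have g: "g \<noteq> 0"
  proof
    assume "g = 0"
    then have "monom (1::'a) n - 1 = 0" using fact by simp
    then have "coeff (monom (1::'a) n - 1) n = 0" by simp
    then show False using n1 by (simp add: coeff_monom)
  qed
  define C where "C = {c. degree c < n \<and> (\<exists>f. c = sm f g)}"
  have code: "skew_code th n g = vec_of n ` C" unfolding C_def by (rule code_char[OF n1 fact])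
  have tlen: "length (tau x) = 2 * s" for x using tau_bij unfolding bij_betw_def by auto
  have tinj: "inj tau" using tau_bij unfolding bij_betw_def by simp
  have trev: "tau (th b) = rev (tau b)" for b unfolding th_def by (rule tau_rev)
  have rev_iff: "reversible_DNA_code tau (skew_code th n g) \<longleftrightarrow> (\<forall>c\<in>C. rvp n c \<in> C)"
  proof -
    have mem: "vec_of n (rvp n c) \<in> vec_of n ` C \<longleftrightarrow> rvp n c \<in> C" for c
    proof
      assume "vec_of n (rvp n c) \<in> vec_of n ` C"
      then obtain d where d: "d \<in> C" "vec_of n (rvp n c) = vec_of n d" by auto
      then have "rvp n c = d" using vec_of_inj[OF degree_rvp[OF n1]] unfolding C_def by auto
      then show "rvp n c \<in> C" using d by simp
    qed auto
    have "reversible_DNA_code tau (vec_of n ` C) \<longleftrightarrow> (\<forall>c\<in>C. dna_phi tau (vec_of n (rvp n c)) \<in> dna_phi tau ` vec_of n ` C)"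
      unfolding reversible_DNA_code_def by (simp add: dna_rev[of tau th, OF trev] vec_of_rvp)
    also have "\<dots> \<longleftrightarrow> (\<forall>c\<in>C. vec_of n (rvp n c) \<in> vec_of n ` C)"
    proof -
      have "dna_phi tau w \<in> dna_phi tau ` V \<longleftrightarrow> w \<in> V" for w V
        using dna_inj[OF tlen _ tinj] s by auto
      then show ?thesis by simp
    qed
    finally show ?thesis using mem code by simp
  qed
  show ?thesis
  proof
    assume R: "reversible_DNA_code tau (skew_code th n g)"
    show "palindromic g"
    proof (cases "degree g < n")
      case True
      have "\<forall>c. degree c < n \<and> (\<exists>f. c = sm f g) \<longrightarrow> (\<exists>f. rvp n c = sm f g)"
        using R rev_iff unfolding C_def by auto
      then show ?thesis using fwd[OF ch n_odd fact g True] by blast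
    next
      case False
      have hnz: "h \<noteq> 0"
      proof
        assume "h = 0"
        then have "monom (1::'a) n - 1 = 0" using fact by simp
        then have "coeff (monom (1::'a) n - 1) n = 0" by simp
        then show False using n1 by (simp add: coeff_monom)
      qed
      have "degree (monom (1::'a) n - 1) = n" by (rule degree_X[OF n1])
      then have "degree h + degree g = n" using fact degree_sm[OF hnz g] by simp
      then have dh: "degree h = 0" using False by simp
      then have hc: "h = [:coeff h 0:]" using degree_0_id by metis
      have h0: "coeff h 0 \<noteq> 0" using hnz hc by (metis pCons_0_0)
      have Xg: "monom 1 n - 1 = smult (coeff h 0) g" using fact hc sm_const by metis
      have cg: "coeff g i = coeff (monom 1 n - 1) i / coeff h 0" for i
      proof -
        have "coeff (monom 1 n - 1) i = coeff h 0 * coeff g i" using Xg by simp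
        then show ?thesis using h0 by (simp add: nonzero_eq_divide_eq mult.commute)
      qed
      have neg: "- x = (x::'a)" for x
      proof -
        have "x + x = (1 + 1) * x" by (simp add: algebra_simps)
        then show ?thesis using ch by (simp add: add_eq_0_iff2 eq_neg_iff_add_eq_0)
      qed
      have dg: "degree g = n" using \<open>degree h + degree g = n\<close> dh by simp
      show ?thesis unfolding palindromic_def
      proof (intro allI impI)
        fix i assume "i \<le> degree g"
        then have i: "i \<le> n" using dg by simp
        have "coeff (monom (1::'a) n - 1) i = coeff (monom (1::'a) n - 1) (n - i)"
        proof (cases "i = 0")
          case True
          then show ?thesis using n1 neg[of 1] by (simp add: coeff_monom coeff_1)
        next
          case False
          then show ?thesis
          proof (cases "i = n")
            case True
            then show ?thesis using n1 neg[of 1] by (simp add: coeff_monom coeff_1)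
          next
            case False
            then show ?thesis using \<open>i \<noteq> 0\<close> i by (simp add: coeff_monom coeff_1)
          qed
        qed
        then show "coeff g i = coeff g (degree g - i)" using cg dg by simp
      qed
    qed
  next
    assume P: "palindromic g"
    have "\<forall>c\<in>C. rvp n c \<in> C"
    proof
      fix c assume "c \<in> C"
      then obtain f where "degree c < n" "c = sm f g" unfolding C_def by auto
      then obtain f' where "rvp n c = sm f' g" using bwd[OF n_odd fact g P] by blast
      then show "rvp n c \<in> C" using degree_rvp[OF n1, of c] unfolding C_def by blast
    qed
    then show "reversible_DNA_code tau (skew_code th n g)" using rev_iff by simp
  qed
qed

end
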